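(* Let $(\mathcal{X},\rho)$ be a separable metric space with Borel $\sigma$-algebra $\mathcal{B}$, and let $\mathbb{X}$ be a process satisfying condition $\mathrm{FMV}$. Then for any $\delta,\varepsilon>0$ and $m_0\in\mathbb{N}$ there exist $M\in\mathbb{N}$ with $M\ge m_0$ and sets $G_1,\dots,G_M\in\mathcal{B}$ that are pairwise disjoint, each satisfying $\sup_{x,x'\in G_i}\rho(x,x')\le\delta$, and such that $\mathbb{P}\big(\exists t:\ X_t\in\mathcal{X}\setminus\bigcup_{i=1}^M G_i\big)<\varepsilon$.
   Context: $\mathrm{FMV}$: the set of processes $\mathbb{X}=(X_t)_{t\ge1}$ in $\mathcal{X}$ such that for every countable partition $\{A_k\}_{k\ge1}$ of $\mathcal{X}$ into sets of $\mathcal{B}$, almost surely $\#\{k:\exists t,\ X_t\in A_k\}<\infty$. *)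

theory Defs
  imports "HOL-Probability.Probability"
begin

definition separable_space :: "'a::metric_space itself \<Rightarrow> bool" where
  "separable_space _ \<longleftrightarrow> (\<exists>D::'a set. countable D \<and> closure D = UNIV)"

definition FMV :: "'w measure \<Rightarrow> (nat \<Rightarrow> 'w \<Rightarrow> 'a::metric_space) \<Rightarrow> bool" where
  "FMV P X \<longleftrightarrow>
     (\<forall>A::nat \<Rightarrow> 'a set.
        (\<forall>k\<ge>1. A k \<in> sets borel) \<and> disjoint_family_on A {1..} \<and> (\<Union>k\<in>{1..}. A k) = UNIV
        \<longrightarrow> (AE \<omega> in P. finite {k. k \<ge> 1 \<and> (\<exists>t\<ge>1. X t \<omega> \<in> A k)}))"

end

theory Submission
  imports Defs
begin

theorem lemma9:
  fixes P :: "'w measure" and X :: "nat \<Rightarrow> 'w \<Rightarrow> 'a::metric_space"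
    and \<delta> \<epsilon> :: real and m0 :: nat
  assumes "separable_space TYPE('a)"
    and "prob_space P"
    and "\<And>t. t \<ge> 1 \<Longrightarrow> X t \<in> borel_measurable P"
    and "FMV P X"
    and "\<delta> > 0" and "\<epsilon> > 0"
  shows "\<exists>M::nat. M \<ge> m0 \<and> (\<exists>G::nat \<Rightarrow> 'a set.
           (\<forall>i\<in>{1..M}. G i \<in> sets borel) \<and>
           disjoint_family_on G {1..M} \<and>
           (\<forall>i\<in>{1..M}. \<forall>x\<in>G i. \<forall>x'\<in>G i. dist x x' \<le> \<delta>) \<and>
           measure P {\<omega> \<in> space P. \<exists>t\<ge>1. X t \<omega> \<in> UNIV - (\<Union>i\<in>{1..M}. G i)} < \<epsilon>)"
proof -
  interpret prob_space P by fact
  obtain D :: "'a set" where D: "countable D" "closure D = UNIV"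
    using assms(1) unfolding separable_space_def by blast
  have Dne: "D \<noteq> {}" using D(2) by auto
  define r where "r = \<delta> / 2"
  have r: "r > 0" using assms(5) by (simp add: r_def)
  define d where "d k = from_nat_into D (k - 1)" for k :: nat
  define A where "A k = (if k = 0 then {} else ball (d k) r - (\<Union>j\<in>{1..<k}. ball (d j) r))" for k
  have Aborel: "A k \<in> sets borel" for k unfolding A_def by auto
  have Adisj: "disjoint_family_on A S" for S
    unfolding disjoint_family_on_def
  proof (intro ballI impI)
    fix m n assume "m \<in> S" "n \<in> S" "m \<noteq> n"
    show "A m \<inter> A n = {}"
    proof (cases "m < n")
      case True
      show ?thesis
      proof (cases "m \<ge> 1")
        case True
        with \<open>m < n\<close> show ?thesis unfolding A_def by auto
      next
        case False
        hence "m = 0" by simp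
        hence "A m = {}" unfolding A_def by auto
        thus ?thesis by simp
      qed
    next
      case False
      hence "n < m" using \<open>m \<noteq> n\<close> by simp
      show ?thesis
      proof (cases "n \<ge> 1")
        case True
        with \<open>n < m\<close> show ?thesis unfolding A_def by auto
      next
        case False
        hence "n = 0" by simp
        hence "A n = {}" unfolding A_def by auto
        thus ?thesis by simp
      qed
    qed
  qed
  have Adiam: "dist x x' \<le> \<delta>" if "x \<in> A k" "x' \<in> A k" for k x x'
  proof -
    have "dist x (d k) < r" "dist x' (d k) < r" using that unfolding A_def
      by (auto simp: dist_commute split: if_splits)
    hence "dist x x' < 2 * r" using dist_triangle2[of x x' "d k"] by linarith
    thus ?thesis unfolding r_def by simp
  qed
  have Acover: "\<exists>k\<ge>1. k > N \<and> x \<in> A k" if "x \<notin> (\<Union>i\<in>{1..N}. A i)" for x N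
  proof -
    have "x \<in> closure D" using D(2) by simp
    then obtain y where y: "y \<in> D" "dist y x < r" using r
      unfolding closure_approachable by blast
    then obtain n where "from_nat_into D n = y" using from_nat_into_surj[OF D(1)] by blast
    hence "d (Suc n) = y" unfolding d_def by simp
    hence ex: "\<exists>k. k \<ge> 1 \<and> x \<in> ball (d k) r" using y by (intro exI[of _ "Suc n"]) auto
    define k where "k = (LEAST k. k \<ge> 1 \<and> x \<in> ball (d k) r)"
    have k: "k \<ge> 1 \<and> x \<in> ball (d k) r" unfolding k_def by (rule LeastI_ex[OF ex])
    have "\<not> (j \<ge> 1 \<and> x \<in> ball (d j) r)" if "j < k" for j
      using not_less_Least[of j "\<lambda>k. k \<ge> 1 \<and> x \<in> ball (d k) r"] that unfolding k_def by blast
    hence "x \<in> A k" using k unfolding A_def by auto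
    moreover have "k > N"
    proof (rule ccontr)
      assume "\<not> N < k" thus False using k \<open>x \<in> A k\<close> that by auto
    qed
    ultimately show ?thesis using k by blast
  qed
  define B where "B N = {\<omega> \<in> space P. \<exists>t\<ge>1. X t \<omega> \<in> UNIV - (\<Union>i\<in>{1..N}. A i)}" for N
  have Bmeas: "B N \<in> sets P" for N
  proof -
    have "B N = (\<Union>t. if t \<ge> 1 then X t -` (UNIV - (\<Union>i\<in>{1..N}. A i)) \<inter> space P else {})"
      unfolding B_def by (auto split: if_splits)
    also have "\<dots> \<in> sets P"
    proof -
      have S: "(UNIV - (\<Union>i\<in>{1..N}. A i)) \<in> sets borel" using Aborel by auto
      have "(if t \<ge> 1 then X t -` (UNIV - (\<Union>i\<in>{1..N}. A i)) \<inter> space P else {}) \<in> sets P" for t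
        using assms(3)[of t] S by (auto intro: measurable_sets)
      thus ?thesis by (intro sets.countable_UN) blast
    qed
    finally show ?thesis .
  qed
  have Bdec: "decseq B"
    unfolding decseq_def B_def by auto
  have FA: "AE \<omega> in P. finite {k. k \<ge> 1 \<and> (\<exists>t\<ge>1. X t \<omega> \<in> A k)}"
  proof -
    have cov: "(\<Union>k\<in>{1..}. A k) = UNIV"
      using Acover[of _ 0] by auto
    show ?thesis using assms(4) Aborel Adisj cov unfolding FMV_def by blast
  qed
  then obtain Nn where Nn: "{x \<in> space P. \<not> finite {k. k \<ge> 1 \<and> (\<exists>t\<ge>1. X t x \<in> A k)}} \<subseteq> Nn"
    "emeasure P Nn = 0" "Nn \<in> sets P" by (rule AE_E)
  have sub: "(\<Inter>N. B N) \<subseteq> Nn"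
  proof
    fix \<omega> assume w: "\<omega> \<in> (\<Inter>N. B N)"
    have "\<forall>N. \<exists>k>N. k \<ge> 1 \<and> (\<exists>t\<ge>1. X t \<omega> \<in> A k)"
    proof
      fix N
      from w have "\<omega> \<in> B N" by auto
      then obtain t where t: "t \<ge> 1" "X t \<omega> \<notin> (\<Union>i\<in>{1..N}. A i)" unfolding B_def by auto
      from Acover[OF t(2)] t(1) show "\<exists>k>N. k \<ge> 1 \<and> (\<exists>t\<ge>1. X t \<omega> \<in> A k)" by blast
    qed
    hence "infinite {k. k \<ge> 1 \<and> (\<exists>t\<ge>1. X t \<omega> \<in> A k)}"
      unfolding infinite_nat_iff_unbounded by simp
    moreover have "\<omega> \<in> space P" using w unfolding B_def by auto
    ultimately have "\<omega> \<in> {x \<in> space P. \<not> finite {k. k \<ge> 1 \<and> (\<exists>t\<ge>1. X t x \<in> A k)}}" by simp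
    thus "\<omega> \<in> Nn" using Nn(1) by (rule subsetD[rotated])
  qed
  have "measure P (\<Inter>N. B N) \<le> measure P Nn"
    using sub Nn(3) by (intro finite_measure_mono) auto
  moreover have "measure P Nn = 0" using Nn(2) by (simp add: measure_def)
  ultimately have m0': "measure P (\<Inter>N. B N) = 0" by (simp add: measure_nonneg antisym)
  have "(\<lambda>n. measure P (B n)) \<longlonglongrightarrow> 0"
    using finite_Lim_measure_decseq[of B] Bmeas Bdec m0' by auto
  hence "eventually (\<lambda>n. measure P (B n) < \<epsilon>) sequentially"
    using assms(6) by (rule order_tendstoD(2))
  then obtain N0 where N0: "\<And>n. n \<ge> N0 \<Longrightarrow> measure P (B n) < \<epsilon>"
    unfolding eventually_sequentially by blast
  define M where "M = max N0 m0"
  have "measure P (B M) < \<epsilon>" using N0 by (simp add: M_def)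
  hence m: "measure P {\<omega> \<in> space P. \<exists>t\<ge>1. X t \<omega> \<in> UNIV - (\<Union>i\<in>{1..M}. A i)} < \<epsilon>"
    unfolding B_def .
  have "M \<ge> m0" by (simp add: M_def)
  moreover have "\<forall>i\<in>{1..M}. A i \<in> sets borel" using Aborel by blast
  moreover have "disjoint_family_on A {1..M}" by (rule Adisj)
  moreover have "\<forall>i\<in>{1..M}. \<forall>x\<in>A i. \<forall>x'\<in>A i. dist x x' \<le> \<delta>" using Adiam by blast
  ultimately show ?thesis using m by blast
qed

end
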